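(* For every $\alpha,\beta\in\mathcal W(\tau_\lambda;\mathbb Z)$, $Z_\alpha Z_\beta=\omega^{2\Theta(\alpha,\beta)}Z_{\alpha+\beta}$ in $\mathcal Z^\omega(\lambda)$. In particular $Z_\alpha Z_\beta=\omega^{4\Theta(\alpha,\beta)}Z_\beta Z_\alpha$.
   Context: $S$ is a closed oriented surface $\bar S$ of genus $g$ minus $s\ge1$ points, $2-2g-s<0$; $\lambda$ is an ideal triangulation (triangulation of $\bar S$ with vertices exactly the removed points) with edges $\lambda_1,\dots,\lambda_n$. Let $a_{ij}\in\{0,1,2\}$ be the number of times an end of $\lambda_j$ immediately succeeds an end of $\lambda_i$ going counterclockwise around a puncture, $\sigma_{ij}=a_{ij}-a_{ji}$. For $\omega\in\mathbb C-\{0\}$, $\mathcal T^\omega(\lambda)$ is generated by $Z_i^{\pm1}$ with relations $Z_iZ_j=\omega^{2\sigma_{ij}}Z_jZ_i$; Weyl ordering $[Z_{i_1}^{n_1}\cdots Z_{i_l}^{n_l}]=\omega^{-\sum_{u<v}n_un_v\sigma_{i_ui_v}}Z_{i_1}^{n_1}\cdots Z_{i_l}^{n_l}$. $\mathcal Z^\omega(\lambda)$ is the subalgebra generated by monomials $Z_1^{k_1}\cdots Z_n^{k_n}$ such that $k_{i_1}+k_{i_2}+k_{i_3}$ is even for the sides $\lambda_{i_1},\lambda_{i_2},\lambda_{i_3}$ of every face. $\tau_\lambda$ is the train track which in each face of $\lambda$ consists of three arcs each joining two sides and turning around the corner between them, with one switch on each edge $\lambda_i$. $\mathcal W(\tau_\lambda;\mathbb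 Z)$ is the group of integer edge weights on $\tau_\lambda$ satisfying the switch conditions; $\alpha_i$ is the total weight on one side of the switch on $\lambda_i$, and $Z_\alpha=[Z_1^{\alpha_1}\cdots Z_n^{\alpha_n}]$. Thurston intersection form: $\Theta(\alpha,\beta)=\frac12\sum_{(e,e')}\bigl(\alpha(e)\beta(e')-\alpha(e')\beta(e)\bigr)$, the sum over all pairs $(e,e')$ of (germs of) edges of $\tau_\lambda$ emerging on the same side of a switch with $e$ to the right of $e'$ (not necessarily adjacent); $\Theta(\alpha,\beta)$ is an integer. *)

theory Defs
  imports Complex_Main
begin

text \<open>An ideal triangulation lambda with edges indexed 0..n-1 (the paper's lambda_1..lambda_n)
is encoded by its finite nonempty set of faces F and, for each face f, the three sides
side f 0, side f 1, side f 2 (edge indices), listed in the order in which they are met when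
running along the boundary of the face counterclockwise (w.r.t. the orientation of the
surface). Positions are taken mod 3. Every edge borders exactly two face-sides (the surface
is obtained by gluing the face-sides in pairs, orientation-reversingly), and the surface is
connected. Corner c of face f is the corner between sides c and c+1 (mod 3).\<close>

definition nxt :: "nat \<Rightarrow> nat" where "nxt k = Suc k mod 3"
definition prv :: "nat \<Rightarrow> nat" where "prv k = (k + 2) mod 3"

definition face_sides :: "'f set \<Rightarrow> ('f \<Rightarrow> nat \<Rightarrow> nat) \<Rightarrow> nat \<Rightarrow> ('f \<times> nat) set" where
  "face_sides F side i = {(f, k). f \<in> F \<and> k < 3 \<and> side f k = i}"

definition face_adj :: "'f set \<Rightarrow> ('f \<Rightarrow> nat \<Rightarrow> nat) \<Rightarrow> 'f \<Rightarrow> 'f \<Rightarrow> bool" where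
  "face_adj F side f g \<longleftrightarrow> f \<in> F \<and> g \<in> F \<and> (\<exists>k<3. \<exists>l<3. side f k = side g l)"

definition ideal_triangulation :: "nat \<Rightarrow> 'f set \<Rightarrow> ('f \<Rightarrow> nat \<Rightarrow> nat) \<Rightarrow> bool" where
  "ideal_triangulation n F side \<longleftrightarrow>
     finite F \<and> F \<noteq> {} \<and>
     (\<forall>f\<in>F. \<forall>k<3. side f k < n) \<and>
     (\<forall>i<n. card (face_sides F side i) = 2) \<and>
     (\<forall>f\<in>F. \<forall>g\<in>F. (face_adj F side)\<^sup>*\<^sup>* f g)"

text \<open>a_ij: number of times an end of lambda_j immediately succeeds an end of lambda_i going
counterclockwise around a puncture. In corner c of face f, going counterclockwise around the
vertex, the end of side f c succeeds the end of side f (c+1).\<close>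

definition a_coef :: "'f set \<Rightarrow> ('f \<Rightarrow> nat \<Rightarrow> nat) \<Rightarrow> nat \<Rightarrow> nat \<Rightarrow> int" where
  "a_coef F side i j = int (card {(f, c). f \<in> F \<and> c < 3 \<and> side f (nxt c) = i \<and> side f c = j})"

definition sigma :: "'f set \<Rightarrow> ('f \<Rightarrow> nat \<Rightarrow> nat) \<Rightarrow> nat \<Rightarrow> nat \<Rightarrow> int" where
  "sigma F side i j = a_coef F side i j - a_coef F side j i"

text \<open>The edges of tau_lambda are the corner arcs (f, c), f in F, c < 3 (arc of face f turning
around corner c, joining sides c and c+1). A weight is a function w :: 'f => nat => int
(only its values on arcs matter). The switch on edge i has two sides, namely the two
face-sides (f,k) with side f k = i; the germs emerging on the side (f,k) are those of the
arcs (f, k-1) and (f, k); their total weight is sw w f k.\<close>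

definition sw :: "('f \<Rightarrow> nat \<Rightarrow> int) \<Rightarrow> 'f \<Rightarrow> nat \<Rightarrow> int" where
  "sw w f k = w f (prv k) + w f k"

definition tt_weight :: "'f set \<Rightarrow> ('f \<Rightarrow> nat \<Rightarrow> nat) \<Rightarrow> ('f \<Rightarrow> nat \<Rightarrow> int) \<Rightarrow> bool" where
  "tt_weight F side w \<longleftrightarrow>
     (\<forall>f\<in>F. \<forall>k<3. \<forall>g\<in>F. \<forall>l<3. side f k = side g l \<longrightarrow> sw w f k = sw w g l)"

text \<open>alpha_i: total weight on one side of the switch on lambda_i.\<close>
definition tt_alpha :: "'f set \<Rightarrow> ('f \<Rightarrow> nat \<Rightarrow> nat) \<Rightarrow> ('f \<Rightarrow> nat \<Rightarrow> int) \<Rightarrow> nat \<Rightarrow> int" where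
  "tt_alpha F side w i = (let (f, k) = (SOME p. p \<in> face_sides F side i) in sw w f k)"

definition wadd :: "('f \<Rightarrow> nat \<Rightarrow> int) \<Rightarrow> ('f \<Rightarrow> nat \<Rightarrow> int) \<Rightarrow> 'f \<Rightarrow> nat \<Rightarrow> int" where
  "wadd a b = (\<lambda>f c. a f c + b f c)"

text \<open>On the side (f,k) of a switch there are exactly two germs; looking from
the switch into the face f, the germ of the arc (f,k) (around the corner at the end of side k
reached last when running counterclockwise along the boundary of f) is to the right of the
germ of the arc (f, k-1). thurston2 is TWICE the Thurston form, i.e. 2 Theta(alpha, beta),
which is an integer by definition (the sum without the factor 1/2).\<close>

definition thurston2 :: "'f set \<Rightarrow> ('f \<Rightarrow> nat \<Rightarrow> int) \<Rightarrow> ('f \<Rightarrow> nat \<Rightarrow> int) \<Rightarrow> int" where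
  "thurston2 F a b = (\<Sum>f\<in>F. \<Sum>k<3. a f k * b f (prv k) - a f (prv k) * b f k)"

text \<open>T^omega(lambda) is presented by generators and relations; we work in an arbitrary
complex algebra A (a ring with a ring homomorphism sc from the complex numbers into its
centre) containing invertible elements Z_i (with inverses Zi i) satisfying the relations
Z_i Z_j = omega^(2 sigma_ij) Z_j Z_i. By the universal property of the presentation this
is equivalent to working in T^omega(lambda) itself.\<close>

definition is_scalar_hom :: "(complex \<Rightarrow> 'a::ring_1) \<Rightarrow> bool" where
  "is_scalar_hom sc \<longleftrightarrow> sc 1 = 1 \<and> (\<forall>x y. sc (x + y) = sc x + sc y) \<and>
     (\<forall>x y. sc (x * y) = sc x * sc y) \<and> (\<forall>x z. sc x * z = z * sc x)"

definition zpow :: "(nat \<Rightarrow> 'a::ring_1) \<Rightarrow> (nat \<Rightarrow> 'a) \<Rightarrow> nat \<Rightarrow> int \<Rightarrow> 'a" where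
  "zpow Z Zi i k = (if 0 \<le> k then Z i ^ nat k else Zi i ^ nat (- k))"

definition monom :: "nat \<Rightarrow> (nat \<Rightarrow> 'a::ring_1) \<Rightarrow> (nat \<Rightarrow> 'a) \<Rightarrow> (nat \<Rightarrow> int) \<Rightarrow> 'a" where
  "monom n Z Zi k = prod_list (map (\<lambda>i. zpow Z Zi i (k i)) [0..<n])"

definition weyl :: "(complex \<Rightarrow> 'a::ring_1) \<Rightarrow> complex \<Rightarrow> (nat \<Rightarrow> nat \<Rightarrow> int) \<Rightarrow> nat \<Rightarrow>
    (nat \<Rightarrow> 'a) \<Rightarrow> (nat \<Rightarrow> 'a) \<Rightarrow> (nat \<Rightarrow> int) \<Rightarrow> 'a" where
  "weyl sc \<omega> \<sigma> n Z Zi k =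
     sc (\<omega> powi (- (\<Sum>u<n. \<Sum>v\<in>{u<..<n}. k u * k v * \<sigma> u v))) * monom n Z Zi k"

text \<open>Exponent vectors of the monomials generating the balanced subalgebra Z^omega(lambda).\<close>
definition balanced :: "'f set \<Rightarrow> ('f \<Rightarrow> nat \<Rightarrow> nat) \<Rightarrow> (nat \<Rightarrow> int) \<Rightarrow> bool" where
  "balanced F side k \<longleftrightarrow> (\<forall>f\<in>F. even (k (side f 0) + k (side f 1) + k (side f 2)))"

end

theory Submission imports Defs begin

definition ss :: "(complex \<Rightarrow> 'a::ring_1) \<Rightarrow> complex \<Rightarrow> int \<Rightarrow> 'a" where
  "ss sc w m = sc (w powi m)"

definition comm :: "(complex \<Rightarrow> 'a::ring_1) \<Rightarrow> complex \<Rightarrow> 'a \<Rightarrow> 'a \<Rightarrow> int \<Rightarrow> bool" where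
  "comm sc w x y m \<longleftrightarrow> x * y = ss sc w m * y * x"

definition zp :: "'a::ring_1 \<Rightarrow> 'a \<Rightarrow> int \<Rightarrow> 'a" where
  "zp x x' p = (if 0 \<le> p then x ^ nat p else x' ^ nat (- p))"

context
  fixes sc :: "complex \<Rightarrow> 'a::ring_1" and \<omega> :: complex
  assumes sc: "is_scalar_hom sc" and om: "\<omega> \<noteq> 0"
begin

lemma sc_one: "sc 1 = 1" using sc unfolding is_scalar_hom_def by blast
lemma sc_mult: "sc (x * y) = sc x * sc y" using sc unfolding is_scalar_hom_def by blast
lemma sc_central: "sc x * z = z * sc x" using sc unfolding is_scalar_hom_def by blast

lemma ss_add: "ss sc \<omega> a * ss sc \<omega> b = ss sc \<omega> (a + b)"
  unfolding ss_def sc_mult[symmetric] using om by (simp add: power_int_add)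

lemma ss_0: "ss sc \<omega> 0 = 1"
  by (simp add: ss_def sc_one)

lemma ss_central: "ss sc \<omega> m * x = x * ss sc \<omega> m"
  unfolding ss_def by (rule sc_central)

lemma ss_left_comm: "x * (ss sc \<omega> m * y) = ss sc \<omega> m * (x * y)"
proof -
  have "x * (ss sc \<omega> m * y) = (x * ss sc \<omega> m) * y" by (simp add: mult.assoc)
  also have "x * ss sc \<omega> m = ss sc \<omega> m * x" by (rule ss_central[symmetric])
  finally show ?thesis by (simp add: mult.assoc)
qed

lemma ss_add2: "ss sc \<omega> a * (ss sc \<omega> b * y) = ss sc \<omega> (a + b) * y"
  by (simp add: mult.assoc[symmetric] ss_add)

lemma comm_pow_left:
  assumes "comm sc \<omega> x y m" shows "comm sc \<omega> (x^p) y (int p * m)"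
proof (induction p)
  case 0 show ?case by (simp add: comm_def ss_0)
next
  case (Suc p)
  have "x^Suc p * y = x * (x^p * y)" by (simp add: mult.assoc)
  also have "\<dots> = x * (ss sc \<omega> (int p*m) * y * x^p)" using Suc by (simp add: comm_def)
  also have "\<dots> = ss sc \<omega> (int p*m) * ((x * y) * x^p)" by (simp add: mult.assoc ss_left_comm[of "x"])
  also have "\<dots> = ss sc \<omega> (int p*m) * (ss sc \<omega> m * y * x * x^p)" using assms by (simp add: comm_def)
  also have "\<dots> = ss sc \<omega> (int p*m + m) * y * x^Suc p" by (simp add: mult.assoc ss_add2)
  finally show ?case by (simp add: comm_def algebra_simps)
qed

lemma comm_pow_right:
  assumes "comm sc \<omega> x y m" shows "comm sc \<omega> x (y^q) (int q * m)"
proof (induction q)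
  case 0 show ?case by (simp add: comm_def ss_0)
next
  case (Suc q)
  have "x * y^Suc q = (x * y) * y^q" by (simp add: mult.assoc)
  also have "\<dots> = ss sc \<omega> m * y * (x * y^q)" using assms by (simp add: comm_def mult.assoc)
  also have "\<dots> = ss sc \<omega> m * y * (ss sc \<omega> (int q*m) * y^q * x)" using Suc by (simp add: comm_def)
  also have "\<dots> = ss sc \<omega> (m + int q*m) * (y * y^q) * x" by (simp add: mult.assoc ss_left_comm[of "y"] ss_add2)
  finally show ?case by (simp add: comm_def algebra_simps)
qed

lemma comm_swap: assumes "comm sc \<omega> x y m" shows "y * x = ss sc \<omega> (-m) * x * y"
proof -
  have "ss sc \<omega> (-m) * x * y = ss sc \<omega> (-m) * (ss sc \<omega> m * y * x)"
    using assms by (simp add: comm_def mult.assoc)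
  also have "\<dots> = y * x" by (simp add: mult.assoc ss_add2 ss_0)
  finally show ?thesis by simp
qed

lemma comm_inv_left:
  assumes "comm sc \<omega> x y m" "x * x' = 1" "x' * x = 1"
  shows "comm sc \<omega> x' y (-m)"
proof -
  have "x' * y = x' * (y * x) * x'" using assms(2) by (simp add: mult.assoc)
  also have "\<dots> = x' * (ss sc \<omega> (-m) * x * y) * x'" using comm_swap[OF assms(1)] by simp
  also have "\<dots> = ss sc \<omega> (-m) * ((x' * x) * y * x')" by (simp add: mult.assoc ss_left_comm[of "x'"])
  finally show ?thesis using assms(3) by (simp add: comm_def mult.assoc)
qed

lemma comm_inv_right:
  assumes "comm sc \<omega> x y m" "y * y' = 1" "y' * y = 1"
  shows "comm sc \<omega> x y' (-m)"
proof -
  have "x * y' = (y' * y) * x * y'" using assms(3) by simp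
  also have "\<dots> = y' * (y * x) * y'" by (simp add: mult.assoc)
  also have "\<dots> = y' * (ss sc \<omega> (-m) * x * y) * y'" using comm_swap[OF assms(1)] by simp
  also have "\<dots> = ss sc \<omega> (-m) * (y' * x * (y * y'))" by (simp add: mult.assoc ss_left_comm[of "y'"])
  finally show ?thesis using assms(2) by (simp add: comm_def mult.assoc)
qed

lemma comm_exp: "comm sc \<omega> x y m \<Longrightarrow> m = m' \<Longrightarrow> comm sc \<omega> x y m'" by simp

lemma comm_zp:
  assumes c: "comm sc \<omega> x y m" and x: "x * x' = 1" "x' * x = 1" and y: "y * y' = 1" "y' * y = 1"
  shows "comm sc \<omega> (zp x x' p) (zp y y' q) (p * q * m)"
proof -
  have c2: "comm sc \<omega> x' y (-m)" by (rule comm_inv_left[OF c x])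
  show ?thesis
  proof (cases "0 \<le> p")
    case p: True
    show ?thesis
    proof (cases "0 \<le> q")
      case q: True
      have h: "comm sc \<omega> (x^nat p) (y^nat q) (int (nat q) * (int (nat p) * m))"
        by (rule comm_pow_right[OF comm_pow_left[OF c]])
      have e: "int (nat q) * (int (nat p) * m) = p * q * m" using p q by simp
      show ?thesis using comm_exp[OF h e] p q by (simp add: zp_def)
    next
      case q: False
      have h: "comm sc \<omega> (x^nat p) (y'^nat (-q)) (int (nat (-q)) * - (int (nat p) * m))"
        by (rule comm_pow_right[OF comm_inv_right[OF comm_pow_left[OF c] y]])
      have e: "int (nat (-q)) * - (int (nat p) * m) = p * q * m" using p q by simp
      show ?thesis using comm_exp[OF h e] p q by (simp add: zp_def)
    qed
  next
    case p: False
    show ?thesis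
    proof (cases "0 \<le> q")
      case q: True
      have h: "comm sc \<omega> (x'^nat (-p)) (y^nat q) (int (nat q) * (int (nat (-p)) * -m))"
        by (rule comm_pow_right[OF comm_pow_left[OF c2]])
      have e: "int (nat q) * (int (nat (-p)) * -m) = p * q * m" using p q by simp
      show ?thesis using comm_exp[OF h e] p q by (simp add: zp_def)
    next
      case q: False
      have h: "comm sc \<omega> (x'^nat (-p)) (y'^nat (-q)) (int (nat (-q)) * - (int (nat (-p)) * -m))"
        by (rule comm_pow_right[OF comm_inv_right[OF comm_pow_left[OF c2] y]])
      have e: "int (nat (-q)) * - (int (nat (-p)) * -m) = p * q * m" using p q by simp
      show ?thesis using comm_exp[OF h e] p q by (simp add: zp_def)
    qed
  qed
qed

lemma comm_one: "comm sc \<omega> x 1 0" by (simp add: comm_def ss_0)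

lemma comm_mult_right:
  assumes "comm sc \<omega> x A a" "comm sc \<omega> x B b"
  shows "comm sc \<omega> x (A * B) (a + b)"
proof -
  have "x * (A * B) = (x * A) * B" by (simp add: mult.assoc)
  also have "\<dots> = ss sc \<omega> a * A * (x * B)" using assms(1) by (simp add: comm_def mult.assoc)
  also have "\<dots> = ss sc \<omega> a * A * (ss sc \<omega> b * B * x)" using assms(2) by (simp add: comm_def)
  also have "\<dots> = ss sc \<omega> (a + b) * (A * B) * x" by (simp add: mult.assoc ss_left_comm[of "A"] ss_add2)
  finally show ?thesis by (simp add: comm_def)
qed

end

lemma zp_succ: assumes "x * x' = 1" "x' * x = 1" shows "zp x x' (q + 1) = zp x x' q * (x::'a::ring_1)"
proof (cases "0 \<le> q")
  case True
  then have "nat (q+1) = Suc (nat q)" by simp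
  then have "x ^ nat (q+1) = x ^ nat q * x" by (simp only: power_Suc2)
  with True show ?thesis by (simp add: zp_def)
next
  case False
  then obtain a where a: "nat (-q) = Suc a" "nat (-(q+1)) = a" by (intro that[of "nat (-q-1)"]) auto
  have "x' ^ Suc a * x = x' ^ a" by (simp only: power_Suc2 mult.assoc assms(2) mult_1_right)
  with False a show ?thesis by (auto simp add: zp_def)
qed

lemma zp_pred: assumes "x * x' = 1" "x' * x = 1" shows "zp x x' (q - 1) = zp x x' q * (x'::'a::ring_1)"
proof -
  have "zp x x' q = zp x x' (q - 1) * x" using zp_succ[OF assms, of "q - 1"] by simp
  then have "zp x x' q * x' = zp x x' (q - 1) * (x * x')" by (simp add: mult.assoc)
  then show ?thesis using assms by simp
qed

lemma zp_add: assumes "x * x' = 1" "x' * x = 1" shows "zp x x' p * zp x x' q = zp x x' (p + q :: int)"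
proof (induction q rule: int_induct[where k=0])
  case base then show ?case by (simp add: zp_def)
next
  case (step1 i)
  have "zp x x' p * zp x x' (i + 1) = zp x x' p * zp x x' i * x" by (simp add: zp_succ[OF assms] mult.assoc)
  also have "\<dots> = zp x x' (p + i + 1)" using step1 by (simp add: zp_succ[OF assms])
  finally show ?case by (simp add: add.assoc)
next
  case (step2 i)
  have "zp x x' p * zp x x' (i - 1) = zp x x' p * zp x x' i * x'" by (simp add: zp_pred[OF assms] mult.assoc)
  also have "\<dots> = zp x x' (p + i - 1)" using step2 by (simp add: zp_pred[OF assms])
  finally show ?case by (simp add: diff_add_eq add_diff_eq)
qed

lemma zpow_zp: "zpow Z Zi i p = zp (Z i) (Zi i) p" by (simp add: zpow_def zp_def)

lemma monom_Suc: "monom (Suc m) Z Zi k = monom m Z Zi k * zpow Z Zi m (k m)"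
  by (simp add: monom_def)

lemma monom_0: "monom 0 Z Zi k = 1" by (simp add: monom_def)

context
  fixes sc :: "complex \<Rightarrow> 'a::ring_1" and \<omega> :: complex and n :: nat and Z Zi :: "nat \<Rightarrow> 'a"
    and sg :: "nat \<Rightarrow> nat \<Rightarrow> int"
  assumes sc: "is_scalar_hom sc" and om: "\<omega> \<noteq> 0"
    and inv: "\<forall>i<n. Z i * Zi i = 1 \<and> Zi i * Z i = 1"
    and rel: "\<forall>i<n. \<forall>j<n. Z i * Z j = sc (\<omega> powi (2 * sg i j)) * Z j * Z i"
begin

lemma zpow_comm: assumes "i < n" "j < n"
  shows "comm sc \<omega> (zpow Z Zi i p) (zpow Z Zi j q) (p * q * (2 * sg i j))"
  unfolding zpow_zp
  apply (rule comm_zp[OF sc om])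
  using assms inv rel by (auto simp: comm_def ss_def)

lemma comm_monom: assumes "i < n" "m \<le> n"
  shows "comm sc \<omega> (zpow Z Zi i p) (monom m Z Zi l) (\<Sum>j<m. p * l j * (2 * sg i j))"
  using assms(2)
proof (induction m)
  case 0 show ?case by (simp add: monom_0 comm_one[OF sc om])
next
  case (Suc m)
  have "comm sc \<omega> (zpow Z Zi i p) (monom m Z Zi l * zpow Z Zi m (l m))
     ((\<Sum>j<m. p * l j * (2 * sg i j)) + p * l m * (2 * sg i m))"
    using Suc by (intro comm_mult_right[OF sc om] zpow_comm assms) auto
  then show ?case by (simp add: monom_Suc)
qed

lemma monom_mult: assumes "m \<le> n"
  shows "monom m Z Zi k * monom m Z Zi l
     = ss sc \<omega> (2 * (\<Sum>i<m. \<Sum>j<i. k i * l j * sg i j)) * monom m Z Zi (\<lambda>i. k i + l i)"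
  using assms
proof (induction m)
  case 0 show ?case by (simp add: monom_0 ss_0[OF sc om])
next
  case (Suc m)
  let ?M = "\<lambda>k. monom m Z Zi k" and ?X = "\<lambda>p. zpow Z Zi m p"
  let ?c = "\<Sum>j<m. k m * l j * (2 * sg m j)"
  let ?E = "2 * (\<Sum>i<m. \<Sum>j<i. k i * l j * sg i j)"
  have cm: "comm sc \<omega> (?X (k m)) (?M l) ?c" using Suc by (intro comm_monom) auto
  have xx: "?X (k m) * ?X (l m) = ?X (k m + l m)"
    unfolding zpow_zp using inv Suc by (intro zp_add) auto
  have "monom (Suc m) Z Zi k * monom (Suc m) Z Zi l = ?M k * (?X (k m) * ?M l) * ?X (l m)"
    by (simp add: monom_Suc mult.assoc)
  also have "\<dots> = ?M k * (ss sc \<omega> ?c * ?M l * ?X (k m)) * ?X (l m)"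
    using cm by (simp add: comm_def)
  also have "\<dots> = ss sc \<omega> ?c * ((?M k * ?M l) * (?X (k m) * ?X (l m)))"
    by (simp add: mult.assoc ss_left_comm[OF sc om, of "?M k"])
  also have "\<dots> = ss sc \<omega> ?c * (ss sc \<omega> ?E * ?M (\<lambda>i. k i + l i) * ?X (k m + l m))"
    using Suc xx by simp
  also have "\<dots> = ss sc \<omega> (?c + ?E) * monom (Suc m) Z Zi (\<lambda>i. k i + l i)"
    by (simp add: monom_Suc mult.assoc ss_add2[OF sc om])
  also have "?c + ?E = 2 * (\<Sum>i<Suc m. \<Sum>j<i. k i * l j * sg i j)"
    by (simp add: sum_distrib_left algebra_simps)
  finally show ?case .
qed

end

definition Wf :: "(nat \<Rightarrow> nat \<Rightarrow> int) \<Rightarrow> nat \<Rightarrow> (nat \<Rightarrow> int) \<Rightarrow> int" where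
  "Wf sg m k = (\<Sum>u<m. \<Sum>v\<in>{u<..<m}. k u * k v * sg u v)"

lemma Wf_Suc: "Wf sg (Suc m) k = Wf sg m k + (\<Sum>u<m. k u * k m * sg u m)"
proof -
  have em: "{m<..<Suc m} = {}" by auto
  have "Wf sg (Suc m) k = (\<Sum>u<m. \<Sum>v\<in>{u<..<Suc m}. k u * k v * sg u v)"
    by (simp add: Wf_def em)
  also have "\<dots> = (\<Sum>u<m. k u * k m * sg u m + (\<Sum>v\<in>{u<..<m}. k u * k v * sg u v))"
  proof (rule sum.cong)
    fix u assume "u \<in> {..<m}"
    then have "{u<..<Suc m} = insert m {u<..<m}" by auto
    then show "(\<Sum>v\<in>{u<..<Suc m}. k u * k v * sg u v) = k u * k m * sg u m + (\<Sum>v\<in>{u<..<m}. k u * k v * sg u v)"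
      by simp
  qed simp
  then show ?thesis by (simp add: sum.distrib Wf_def em)
qed

lemma W_identity:
  assumes as: "\<And>i j. sg i j = - sg j i"
  shows "Wf sg m (\<lambda>i. k i + l i) - Wf sg m k - Wf sg m l
     = (\<Sum>i<m. \<Sum>j<m. k i * l j * sg i j) - 2 * (\<Sum>i<m. \<Sum>j<i. k i * l j * sg i j)"
proof (induction m)
  case 0 show ?case by (simp add: Wf_def)
next
  case (Suc m)
  have d: "sg m m = 0" using as[of m m] by simp
  have e: "(\<Sum>j<m. k m * l j * sg m j) = - (\<Sum>j<m. l j * k m * sg j m)"
  proof -
    have t: "k m * l j * sg m j = - (l j * k m * sg j m)" for j
      using as[of m j] by (simp add: algebra_simps)
    show ?thesis by (simp add: sum_negf[symmetric] t)
  qed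
  have "(\<Sum>i<Suc m. \<Sum>j<Suc m. k i * l j * sg i j) = (\<Sum>i<m. \<Sum>j<m. k i * l j * sg i j)
      + (\<Sum>i<m. k i * l m * sg i m) + (\<Sum>j<m. k m * l j * sg m j) + k m * l m * sg m m"
    by (simp add: sum.distrib)
  then show ?case using Suc e d
    by (simp add: Wf_Suc sum.distrib sum_distrib_left algebra_simps)
qed

context
  fixes sc :: "complex \<Rightarrow> 'a::ring_1" and \<omega> :: complex and n :: nat and Z Zi :: "nat \<Rightarrow> 'a"
    and sg :: "nat \<Rightarrow> nat \<Rightarrow> int"
  assumes sc: "is_scalar_hom sc" and om: "\<omega> \<noteq> 0"
    and inv: "\<forall>i<n. Z i * Zi i = 1 \<and> Zi i * Z i = 1"
    and rel: "\<forall>i<n. \<forall>j<n. Z i * Z j = sc (\<omega> powi (2 * sg i j)) * Z j * Z i"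
    and as: "\<And>i j. sg i j = - sg j i"
begin

lemma weyl_mult:
  "weyl sc \<omega> sg n Z Zi k * weyl sc \<omega> sg n Z Zi l
   = ss sc \<omega> (\<Sum>i<n. \<Sum>j<n. k i * l j * sg i j) * weyl sc \<omega> sg n Z Zi (\<lambda>i. k i + l i)"
proof -
  have wk: "\<And>k. weyl sc \<omega> sg n Z Zi k = ss sc \<omega> (- Wf sg n k) * monom n Z Zi k"
    by (simp add: weyl_def Wf_def ss_def)
  let ?E = "2 * (\<Sum>i<n. \<Sum>j<i. k i * l j * sg i j)"
  let ?T = "\<Sum>i<n. \<Sum>j<n. k i * l j * sg i j"
  have "weyl sc \<omega> sg n Z Zi k * weyl sc \<omega> sg n Z Zi l
      = ss sc \<omega> (- Wf sg n k) * (ss sc \<omega> (- Wf sg n l) * (monom n Z Zi k * monom n Z Zi l))"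
    by (simp add: wk mult.assoc ss_left_comm[OF sc om, of "monom n Z Zi k"])
  also have "\<dots> = ss sc \<omega> (- Wf sg n k) * (ss sc \<omega> (- Wf sg n l) * (ss sc \<omega> ?E * monom n Z Zi (\<lambda>i. k i + l i)))"
    using monom_mult[OF sc om inv rel, of n k l] by simp
  also have "\<dots> = ss sc \<omega> (- Wf sg n k + (- Wf sg n l + ?E)) * monom n Z Zi (\<lambda>i. k i + l i)"
    by (simp add: ss_add2[OF sc om])
  also have "- Wf sg n k + (- Wf sg n l + ?E) = ?T + - Wf sg n (\<lambda>i. k i + l i)"
    using W_identity[of sg n k l, OF as] by simp
  also have "ss sc \<omega> (?T + - Wf sg n (\<lambda>i. k i + l i)) * monom n Z Zi (\<lambda>i. k i + l i)
     = ss sc \<omega> ?T * weyl sc \<omega> sg n Z Zi (\<lambda>i. k i + l i)"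
    by (simp add: wk ss_add2[OF sc om])
  finally show ?thesis .
qed

end

lemma card_sum:
  fixes g :: "nat \<Rightarrow> nat \<Rightarrow> int"
  assumes fin: "finite C" and bd: "\<And>p. p \<in> C \<Longrightarrow> u p < n \<and> v p < n"
  shows "(\<Sum>i<n. \<Sum>j<n. g i j * int (card {p\<in>C. u p = i \<and> v p = j})) = (\<Sum>p\<in>C. g (u p) (v p))"
proof -
  have c: "int (card {p\<in>C. u p = i \<and> v p = j}) = (\<Sum>p\<in>C. if u p = i \<and> v p = j then 1 else 0)" for i j
    using fin by (simp add: sum.inter_filter[symmetric])
  have "(\<Sum>i<n. \<Sum>j<n. g i j * int (card {p\<in>C. u p = i \<and> v p = j}))
      = (\<Sum>i<n. \<Sum>j<n. \<Sum>p\<in>C. if u p = i \<and> v p = j then g i j else 0)"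
    by (simp add: c sum_distrib_left if_distrib cong: if_cong)
  also have "\<dots> = (\<Sum>i<n. \<Sum>p\<in>C. \<Sum>j<n. if u p = i \<and> v p = j then g i j else 0)"
    by (rule sum.cong[OF refl], rule sum.swap)
  also have "\<dots> = (\<Sum>p\<in>C. \<Sum>i<n. \<Sum>j<n. if u p = i \<and> v p = j then g i j else 0)"
    by (rule sum.swap)
  also have "\<dots> = (\<Sum>p\<in>C. g (u p) (v p))"
  proof (rule sum.cong[OF refl])
    fix p assume p: "p \<in> C"
    have "(\<Sum>i<n. \<Sum>j<n. if u p = i \<and> v p = j then g i j else 0)
        = (\<Sum>i<n. if i = u p then (\<Sum>j<n. if j = v p then g i j else 0) else 0)"
      by (rule sum.cong) auto
    also have "\<dots> = g (u p) (v p)" using bd[OF p] by simp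
    finally show "(\<Sum>i<n. \<Sum>j<n. if u p = i \<and> v p = j then g i j else 0) = g (u p) (v p)" .
  qed
  finally show ?thesis .
qed

lemma alpha_side:
  assumes "f \<in> F" "k < 3" "tt_weight F side w"
  shows "tt_alpha F side w (side f k) = sw w f k"
proof -
  define p where "p = (SOME p. p \<in> face_sides F side (side f k))"
  have "(f, k) \<in> face_sides F side (side f k)" using assms by (simp add: face_sides_def)
  then have "p \<in> face_sides F side (side f k)" unfolding p_def by (rule someI)
  then have "fst p \<in> F" "snd p < 3" "side (fst p) (snd p) = side f k"
    by (auto simp: face_sides_def)
  then have "sw w (fst p) (snd p) = sw w f k" using assms unfolding tt_weight_def by blast
  then show ?thesis by (simp add: tt_alpha_def p_def[symmetric] Let_def split_def)
qed

lemma alpha_add: "tt_alpha F side (wadd a b) i = tt_alpha F side a i + tt_alpha F side b i"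
  by (simp add: tt_alpha_def Let_def split_def sw_def wadd_def)

lemma three: "{..<3::nat} = {0,1,2}" by auto

lemma sum3: "(\<Sum>c<3::nat. g c) = g 0 + g 1 + (g 2 :: int)"
proof -
  have "(\<Sum>c<3::nat. g c) = (\<Sum>c\<in>{0,1,2}. g c)" by (simp only: three)
  also have "\<dots> = g 0 + g 1 + g 2" by simp
  finally show ?thesis .
qed

lemma nxt_vals: "nxt 0 = 1" "nxt 1 = 2" "nxt 2 = 0" by (simp_all add: nxt_def)
lemma prv_vals: "prv 0 = 2" "prv 1 = 0" "prv 2 = 1" by (simp_all add: prv_def)

lemma balanced_alpha:
  assumes "tt_weight F side w" shows "balanced F side (tt_alpha F side w)"
  unfolding balanced_def
proof
  fix f assume f: "f \<in> F"
  have "tt_alpha F side w (side f 0) + tt_alpha F side w (side f 1) + tt_alpha F side w (side f 2)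
     = 2 * (w f 0 + w f 1 + w f 2)"
    using alpha_side[OF f _ assms, of 0] alpha_side[OF f _ assms, of 1] alpha_side[OF f _ assms, of 2]
    by (simp only: sw_def prv_vals) simp
  then show "even (tt_alpha F side w (side f 0) + tt_alpha F side w (side f 1) + tt_alpha F side w (side f 2))"
    by simp
qed

lemma sigma_antisym: "sigma F side i j = - sigma F side j i"
  by (simp add: sigma_def)

lemma thurston_anti: "thurston2 F b a = - thurston2 F a b"
  by (simp add: thurston2_def sum_negf[symmetric] algebra_simps)

lemma sigma_thurston:
  assumes tri: "ideal_triangulation n F side"
    and wa: "tt_weight F side a" and wb: "tt_weight F side b"
  shows "(\<Sum>i<n. \<Sum>j<n. tt_alpha F side a i * tt_alpha F side b j * sigma F side i j) = thurston2 F a b"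
proof -
  define \<alpha> where "\<alpha> = tt_alpha F side a"
  define \<beta> where "\<beta> = tt_alpha F side b"
  define C where "C = F \<times> {..<3::nat}"
  define u where "u p = side (fst p) (nxt (snd p))" for p
  define v where "v p = side (fst p) (snd p)" for p
  have finF: "finite F" and sbd: "\<And>f k. f \<in> F \<Longrightarrow> k < 3 \<Longrightarrow> side f k < n"
    using tri by (auto simp: ideal_triangulation_def)
  have fin: "finite C" using finF by (simp add: C_def)
  have nx: "nxt k < 3" for k by (simp add: nxt_def)
  have bd: "u p < n \<and> v p < n" if "p \<in> C" for p
    using that sbd nx by (auto simp: C_def u_def v_def)
  have ac: "a_coef F side i j = int (card {p\<in>C. u p = i \<and> v p = j})" for i j
  proof -
    have "{(f, c). f \<in> F \<and> c < 3 \<and> side f (nxt c) = i \<and> side f c = j} = {p\<in>C. u p = i \<and> v p = j}"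
      by (auto simp: C_def u_def v_def)
    then show ?thesis by (simp add: a_coef_def)
  qed
  have s1: "(\<Sum>i<n. \<Sum>j<n. \<alpha> i * \<beta> j * a_coef F side i j) = (\<Sum>p\<in>C. \<alpha> (u p) * \<beta> (v p))"
    using card_sum[where C=C and u=u and v=v and n=n and g="\<lambda>i j. \<alpha> i * \<beta> j", OF fin bd] by (simp add: ac)
  have "(\<Sum>i<n. \<Sum>j<n. \<alpha> i * \<beta> j * a_coef F side j i) = (\<Sum>j<n. \<Sum>i<n. \<alpha> i * \<beta> j * a_coef F side j i)"
    by (rule sum.swap)
  also have "\<dots> = (\<Sum>p\<in>C. \<alpha> (v p) * \<beta> (u p))"
    using card_sum[where C=C and u=u and v=v and n=n and g="\<lambda>j i. \<alpha> i * \<beta> j", OF fin bd] by (simp add: ac)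
  finally have s2: "(\<Sum>i<n. \<Sum>j<n. \<alpha> i * \<beta> j * a_coef F side j i) = (\<Sum>p\<in>C. \<alpha> (v p) * \<beta> (u p))" .
  have "(\<Sum>i<n. \<Sum>j<n. \<alpha> i * \<beta> j * sigma F side i j)
      = (\<Sum>i<n. \<Sum>j<n. \<alpha> i * \<beta> j * a_coef F side i j) - (\<Sum>i<n. \<Sum>j<n. \<alpha> i * \<beta> j * a_coef F side j i)"
    by (simp add: sigma_def right_diff_distrib sum_subtractf)
  also have "\<dots> = (\<Sum>p\<in>C. \<alpha> (u p) * \<beta> (v p) - \<alpha> (v p) * \<beta> (u p))"
    by (simp add: s1 s2 sum_subtractf)
  also have "\<dots> = (\<Sum>f\<in>F. \<Sum>c<3. \<alpha> (side f (nxt c)) * \<beta> (side f c) - \<alpha> (side f c) * \<beta> (side f (nxt c)))"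
    by (simp add: C_def u_def v_def sum.cartesian_product split_def)
  also have "\<dots> = thurston2 F a b"
    unfolding thurston2_def
  proof (rule sum.cong[OF refl])
    fix f assume f: "f \<in> F"
    have A: "\<alpha> (side f k) = sw a f k" "\<beta> (side f k) = sw b f k" if "k < 3" for k
      using alpha_side[OF f that wa] alpha_side[OF f that wb] by (simp_all add: \<alpha>_def \<beta>_def)
    have A0: "\<alpha> (side f 0) = sw a f 0" "\<beta> (side f 0) = sw b f 0" using A[of 0] by simp_all
    have A1: "\<alpha> (side f 1) = sw a f 1" "\<beta> (side f 1) = sw b f 1" using A[of 1] by simp_all
    have A2: "\<alpha> (side f 2) = sw a f 2" "\<beta> (side f 2) = sw b f 2" using A[of 2] by simp_all
    show "(\<Sum>c<3. \<alpha> (side f (nxt c)) * \<beta> (side f c) - \<alpha> (side f c) * \<beta> (side f (nxt c)))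
        = (\<Sum>k<3. a f k * b f (prv k) - a f (prv k) * b f k)"
      unfolding sum3 by (simp only: nxt_vals prv_vals A0 A1 A2 sw_def) (simp add: algebra_simps)
  qed
  finally show ?thesis by (simp add: \<alpha>_def \<beta>_def)
qed

theorem lemma3p2:
  fixes n :: nat and F :: "'f set" and side :: "'f \<Rightarrow> nat \<Rightarrow> nat"
    and \<omega> :: complex and sc :: "complex \<Rightarrow> 'a::ring_1"
    and Z Zi :: "nat \<Rightarrow> 'a" and a b :: "'f \<Rightarrow> nat \<Rightarrow> int"
  assumes tri: "ideal_triangulation n F side"
    and om: "\<omega> \<noteq> 0"
    and sc: "is_scalar_hom sc"
    and inv: "\<forall>i<n. Z i * Zi i = 1 \<and> Zi i * Z i = 1"
    and rel: "\<forall>i<n. \<forall>j<n. Z i * Z j = sc (\<omega> powi (2 * sigma F side i j)) * Z j * Z i"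
    and wa: "tt_weight F side a"
    and wb: "tt_weight F side b"
  shows "balanced F side (tt_alpha F side a)
       \<and> balanced F side (tt_alpha F side b)
       \<and> balanced F side (tt_alpha F side (wadd a b))
       \<and> weyl sc \<omega> (sigma F side) n Z Zi (tt_alpha F side a) * weyl sc \<omega> (sigma F side) n Z Zi (tt_alpha F side b)
           = sc (\<omega> powi (thurston2 F a b)) * weyl sc \<omega> (sigma F side) n Z Zi (tt_alpha F side (wadd a b))
       \<and> weyl sc \<omega> (sigma F side) n Z Zi (tt_alpha F side a) * weyl sc \<omega> (sigma F side) n Z Zi (tt_alpha F side b)
           = sc (\<omega> powi (2 * thurston2 F a b)) * weyl sc \<omega> (sigma F side) n Z Zi (tt_alpha F side b) * weyl sc \<omega> (sigma F side) n Z Zi (tt_alpha F side a)"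
proof -
  define \<alpha> where "\<alpha> = tt_alpha F side a"
  define \<beta> where "\<beta> = tt_alpha F side b"
  define W where "W = weyl sc \<omega> (sigma F side) n Z Zi"
  define T where "T = thurston2 F a b"
  have sum_ab: "tt_alpha F side (wadd a b) = (\<lambda>i. \<alpha> i + \<beta> i)"
    by (simp add: fun_eq_iff alpha_add \<alpha>_def \<beta>_def)
  have sum_ba: "(\<lambda>i. \<beta> i + \<alpha> i) = (\<lambda>i. \<alpha> i + \<beta> i)" by (simp add: add.commute)
  have ba: "balanced F side \<alpha>" "balanced F side \<beta>"
    using balanced_alpha[OF wa] balanced_alpha[OF wb] by (simp_all add: \<alpha>_def \<beta>_def)
  have bab: "balanced F side (tt_alpha F side (wadd a b))"
    using ba unfolding sum_ab balanced_def by (auto simp: algebra_simps)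
  have t1: "(\<Sum>i<n. \<Sum>j<n. \<alpha> i * \<beta> j * sigma F side i j) = T"
    using sigma_thurston[OF tri wa wb] by (simp add: \<alpha>_def \<beta>_def T_def)
  have t2: "(\<Sum>i<n. \<Sum>j<n. \<beta> i * \<alpha> j * sigma F side i j) = - T"
    using sigma_thurston[OF tri wb wa] thurston_anti[of F b a] by (simp add: \<alpha>_def \<beta>_def T_def)
  have m1': "W \<alpha> * W \<beta> = ss sc \<omega> (\<Sum>i<n. \<Sum>j<n. \<alpha> i * \<beta> j * sigma F side i j) * W (\<lambda>i. \<alpha> i + \<beta> i)"
    unfolding W_def by (rule weyl_mult[OF sc om inv rel sigma_antisym])
  have m2': "W \<beta> * W \<alpha> = ss sc \<omega> (\<Sum>i<n. \<Sum>j<n. \<beta> i * \<alpha> j * sigma F side i j) * W (\<lambda>i. \<beta> i + \<alpha> i)"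
    unfolding W_def by (rule weyl_mult[OF sc om inv rel sigma_antisym])
  have m1: "W \<alpha> * W \<beta> = ss sc \<omega> T * W (\<lambda>i. \<alpha> i + \<beta> i)" using m1' t1 by simp
  have m2: "W \<beta> * W \<alpha> = ss sc \<omega> (- T) * W (\<lambda>i. \<alpha> i + \<beta> i)" using m2' t2 sum_ba by simp
  have m3: "W \<alpha> * W \<beta> = ss sc \<omega> (2 * T) * W \<beta> * W \<alpha>"
    by (simp add: m1 m2 mult.assoc ss_add2[OF sc om])
  show ?thesis
    using ba bab m1 m3
    by (simp add: W_def T_def \<alpha>_def \<beta>_def sum_ab ss_def)
qed

end
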